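(* If some set maximizing $\widehat{sw}$ over nonempty subsets of $\mathbb{S}$ has cardinality $k$, then $\{1,2,\dots,k\}$ also maximizes $\widehat{sw}$ over nonempty subsets of $\mathbb{S}$.
   Context: Sellers $\mathbb{S}=\{1,\dots,n\}$ with product qualities $\theta_1\ge\theta_2\ge\dots\ge\theta_n\ge0$. Let $W$ be the Lambert W function on $[0,\infty)$ ($W(x)e^{W(x)}=x$) and $w_i=W(e^{\theta_i-1})$, so $w_1\ge\dots\ge w_n>0$. For nonempty $S\subseteq\mathbb{S}$, the Cournot-equilibrium social welfare when $S$ is displayed is $\widehat{sw}(S)=\log(1+\sum_{i\in S}w_i)+\frac{\sum_{i\in S}(w_i^2+w_i)}{1+\sum_{i\in S}w_i}$. *)

theory Defs
  imports "HOL-Analysis.Analysis"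
begin

definition lambertW :: "real \<Rightarrow> real" where
  "lambertW x = (THE w. w \<ge> 0 \<and> w * exp w = x)"

definition wq :: "(nat \<Rightarrow> real) \<Rightarrow> nat \<Rightarrow> real" where
  "wq \<theta> i = lambertW (exp (\<theta> i - 1))"

text \<open>Cournot-equilibrium social welfare of displayed set S.\<close>
definition sw_hat :: "(nat \<Rightarrow> real) \<Rightarrow> nat set \<Rightarrow> real" where
  "sw_hat \<theta> S = ln (1 + (\<Sum>i\<in>S. wq \<theta> i))
     + (\<Sum>i\<in>S. (wq \<theta> i)\<^sup>2 + wq \<theta> i) / (1 + (\<Sum>i\<in>S. wq \<theta> i))"

definition is_sw_max :: "nat \<Rightarrow> (nat \<Rightarrow> real) \<Rightarrow> nat set \<Rightarrow> bool" where
  "is_sw_max n \<theta> S \<longleftrightarrow> S \<subseteq> {1..n} \<and> S \<noteq> {} \<and>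
     (\<forall>T. T \<subseteq> {1..n} \<and> T \<noteq> {} \<longrightarrow> sw_hat \<theta> T \<le> sw_hat \<theta> S)"

end

theory Submission imports Defs begin

lemma xexp_strict: "(0::real) \<le> a \<Longrightarrow> a < b \<Longrightarrow> a * exp a < b * exp b"
proof -
  assume a: "0 \<le> a" "a < b"
  have "a * exp a \<le> a * exp b" using a by (intro mult_left_mono) auto
  also have "\<dots> < b * exp b" using a by (intro mult_strict_right_mono) auto
  finally show ?thesis .
qed

lemma lambertW_props:
  assumes "(x::real) > 0"
  shows "lambertW x \<ge> 0 \<and> lambertW x * exp (lambertW x) = x"
proof -
  have "\<exists>w. 0 \<le> w \<and> w \<le> x \<and> w * exp w = x"
    apply (rule IVT[where f="\<lambda>w. w * exp w"])
    using assms by (auto intro!: continuous_intros)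
  then obtain w where w: "0 \<le> w" "w * exp w = x" by blast
  have u: "\<And>v. 0 \<le> v \<and> v * exp v = x \<Longrightarrow> v = w"
    using xexp_strict w by (metis linorder_neqE_linordered_idom order_less_irrefl)
  have "\<exists>!v. 0 \<le> v \<and> v * exp v = x" using w u by blast
  from theI'[OF this] show ?thesis unfolding lambertW_def .
qed

lemma lambertW_pos: "(x::real) > 0 \<Longrightarrow> lambertW x > 0"
  using lambertW_props[of x] by (metis less_eq_real_def mult_zero_left)

lemma lambertW_mono: "(0::real) < x \<Longrightarrow> x \<le> y \<Longrightarrow> lambertW x \<le> lambertW y"
  using lambertW_props[of x] lambertW_props[of y] xexp_strict[of "lambertW y" "lambertW x"]
  by force

definition G :: "real \<Rightarrow> real \<Rightarrow> real \<Rightarrow> real" where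
  "G R Q x = ln (1 + R + x) + (Q + x\<^sup>2 + x) / (1 + R + x)"

definition NN :: "real \<Rightarrow> real \<Rightarrow> real \<Rightarrow> real" where
  "NN R Q x = x\<^sup>2 + x * (2*R+3) + 2 + 2*R - Q"

lemma G_deriv:
  assumes "R \<ge> 0" "x \<ge> 0"
  shows "DERIV (G R Q) x :> NN R Q x / (1 + R + x)\<^sup>2"
proof -
  have p: "1 + R + x > 0" using assms by auto
  have "DERIV (G R Q) x :> (1 / (1+R+x) + ((2*x+1) * (1+R+x) - (Q + x\<^sup>2 + x) * 1) / (1+R+x)\<^sup>2)"
    unfolding G_def using p
    by (auto intro!: derivative_eq_intros simp: power2_eq_square)
  moreover have "1 / (1+R+x) + ((2*x+1) * (1+R+x) - (Q + x\<^sup>2 + x) * 1) / (1+R+x)\<^sup>2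
      = NN R Q x / (1 + R + x)\<^sup>2"
  proof -
    have "1 / (1+R+x) = (1+R+x) / (1+R+x)\<^sup>2" using p by (simp add: power2_eq_square)
    hence "1 / (1+R+x) + ((2*x+1) * (1+R+x) - (Q + x\<^sup>2 + x) * 1) / (1+R+x)\<^sup>2
       = ((1+R+x) + ((2*x+1) * (1+R+x) - (Q + x\<^sup>2 + x) * 1)) / (1+R+x)\<^sup>2"
      by (simp only: add_divide_distrib[symmetric])
    also have "(1+R+x) + ((2*x+1) * (1+R+x) - (Q + x\<^sup>2 + x) * 1) = NN R Q x"
      unfolding NN_def by (simp add: algebra_simps power2_eq_square)
    finally show ?thesis .
  qed
  ultimately show ?thesis by simp
qed

lemma NN_mono: "R \<ge> 0 \<Longrightarrow> 0 \<le> a \<Longrightarrow> a < x \<Longrightarrow> NN R Q a < NN R Q x"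
proof -
  assume h: "R \<ge> 0" "0 \<le> a" "a < x"
  have "NN R Q x - NN R Q a = (x - a) * (x + a + 2*R + 3)"
    unfolding NN_def by (simp add: algebra_simps power2_eq_square)
  moreover have "(x - a) * (x + a + 2*R + 3) > 0" using h by auto
  ultimately show ?thesis by linarith
qed

lemma G_key:
  assumes R: "R \<ge> 0" and a: "0 < a" "a \<le> b" and g0: "G R Q 0 \<le> G R Q a"
  shows "G R Q a \<le> G R Q b"
proof (cases "NN R Q a \<ge> 0")
  case True
  show ?thesis
  proof (cases "a = b")
    case False
    hence ab: "a < b" using a by auto
    have "\<And>x. a < x \<Longrightarrow> x < b \<Longrightarrow> \<exists>y. DERIV (G R Q) x :> y \<and> y \<ge> 0"
    proof -
      fix x assume x: "a < x" "x < b"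
      have "NN R Q a < NN R Q x" by (rule NN_mono) (use R a x in auto)
      hence "NN R Q x > 0" using True by auto
      thus "\<exists>y. DERIV (G R Q) x :> y \<and> y \<ge> 0"
        using G_deriv[OF R, of x] x a by (intro exI[of _ "NN R Q x / (1 + R + x)\<^sup>2"]) auto
    qed
    moreover have "continuous_on {a..b} (G R Q)"
      proof (intro DERIV_atLeastAtMost_imp_continuous_on[of a b])
      fix x assume "a \<le> x" "x \<le> b"
      thus "\<exists>y. DERIV (G R Q) x :> y" using G_deriv[OF R, of x Q] a by auto
    qed
    ultimately show ?thesis using DERIV_nonneg_imp_increasing_open[OF a(2)] by blast
  qed simp
next
  case False
  note nF = False
  have "G R Q 0 > G R Q a"
  proof (rule DERIV_neg_imp_decreasing[OF a(1)])
    fix x assume x: "0 \<le> x" "x \<le> a"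
    have "NN R Q x < 0"
    proof (cases "x = a")
      case False
      have "NN R Q x < NN R Q a" by (rule NN_mono) (use R x False in auto)
      thus ?thesis using nF by auto
    qed (use nF in auto)
    moreover have "(1 + R + x)\<^sup>2 > 0" using R x by auto
    ultimately show "\<exists>y. DERIV (G R Q) x :> y \<and> y < 0"
      using G_deriv[OF R x(1)] by (intro exI[of _ "NN R Q x / (1 + R + x)\<^sup>2"]) (auto simp: divide_neg_pos)
  qed
  thus ?thesis using g0 by auto
qed

lemma sw_split:
  assumes "finite T" "j \<notin> T"
  shows "sw_hat \<theta> (insert j T) = G (\<Sum>i\<in>T. wq \<theta> i) (\<Sum>i\<in>T. (wq \<theta> i)\<^sup>2 + wq \<theta> i) (wq \<theta> j)"
  using assms unfolding sw_hat_def G_def by (simp add: algebra_simps)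

lemma sw_zero: "sw_hat \<theta> T = G (\<Sum>i\<in>T. wq \<theta> i) (\<Sum>i\<in>T. (wq \<theta> i)\<^sup>2 + wq \<theta> i) 0"
  unfolding sw_hat_def G_def by simp

lemma exchange:
  assumes mono: "\<And>i j. 1 \<le> i \<Longrightarrow> i \<le> j \<Longrightarrow> j \<le> n \<Longrightarrow> \<theta> j \<le> \<theta> i"
    and mx: "is_sw_max n \<theta> S" and j: "j \<in> S" and i: "1 \<le> i" "i < j" "i \<notin> S"
  shows "is_sw_max n \<theta> (insert i (S - {j}))"
proof -
  have Sn: "S \<subseteq> {1..n}" and Sne: "S \<noteq> {}" and best: "\<And>T. T \<subseteq> {1..n} \<Longrightarrow> T \<noteq> {} \<Longrightarrow> sw_hat \<theta> T \<le> sw_hat \<theta> S"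
    using mx unfolding is_sw_max_def by auto
  have jn: "j \<in> {1..n}" using j Sn by auto
  have wpos: "\<And>k. wq \<theta> k > 0" unfolding wq_def by (rule lambertW_pos) simp
  have wij: "wq \<theta> j \<le> wq \<theta> i" unfolding wq_def
    using mono[of i j] i jn by (intro lambertW_mono) auto
  define T where "T = S - {j}"
  have fT: "finite T" using Sn T_def finite_subset by blast
  define R where "R = (\<Sum>k\<in>T. wq \<theta> k)"
  define Q where "Q = (\<Sum>k\<in>T. (wq \<theta> k)\<^sup>2 + wq \<theta> k)"
  have R0: "R \<ge> 0" unfolding R_def using wpos by (intro sum_nonneg) (auto intro: less_imp_le)
  have eS: "sw_hat \<theta> S = G R Q (wq \<theta> j)"
    using sw_split[OF fT, of j \<theta>] j unfolding T_def R_def Q_def by (simp add: insert_absorb)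
  have iT: "i \<notin> T" using i T_def by auto
  have eN: "sw_hat \<theta> (insert i T) = G R Q (wq \<theta> i)"
    using sw_split[OF fT iT] unfolding R_def Q_def by simp
  have g0: "G R Q 0 \<le> G R Q (wq \<theta> j)"
  proof (cases "T = {}")
    case True
    hence "R = 0" "Q = 0" unfolding R_def Q_def by auto
    moreover have "0 \<le> ln (1 + wq \<theta> j) + ((wq \<theta> j)\<^sup>2 + wq \<theta> j) / (1 + wq \<theta> j)"
      using wpos[of j] by (intro add_nonneg_nonneg) auto
    ultimately show ?thesis unfolding G_def by simp
  next
    case False
    have "sw_hat \<theta> T \<le> sw_hat \<theta> S" using False Sn T_def by (intro best) auto
    thus ?thesis using eS sw_zero[of \<theta> T] unfolding R_def Q_def by simp
  qed
  have "G R Q (wq \<theta> j) \<le> G R Q (wq \<theta> i)" by (rule G_key[OF R0 wpos wij g0])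
  hence "sw_hat \<theta> S \<le> sw_hat \<theta> (insert i T)" using eS eN by simp
  moreover have "insert i T \<subseteq> {1..n}" using Sn T_def i jn by auto
  ultimately show ?thesis unfolding is_sw_max_def T_def using best by (meson dual_order.trans insert_not_empty)
qed

theorem lemma7:
  fixes n :: nat and \<theta> :: "nat \<Rightarrow> real" and S :: "nat set"
  assumes "n \<ge> 1"
    and "\<And>i j. 1 \<le> i \<Longrightarrow> i \<le> j \<Longrightarrow> j \<le> n \<Longrightarrow> \<theta> j \<le> \<theta> i"
    and "\<And>i. 1 \<le> i \<Longrightarrow> i \<le> n \<Longrightarrow> \<theta> i \<ge> 0"
    and "is_sw_max n \<theta> S"
  shows "is_sw_max n \<theta> {1..card S}"
proof -
  have "\<forall>S. \<Sum>S = m \<longrightarrow> is_sw_max n \<theta> S \<longrightarrow> is_sw_max n \<theta> {1..card S}" for m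
  proof (induction m rule: less_induct)
    case (less m)
    show ?case
    proof (intro allI impI)
      fix S assume Sm: "\<Sum>S = m" and mx: "is_sw_max n \<theta> S"
      have Sn: "S \<subseteq> {1..n}" using mx unfolding is_sw_max_def by auto
      have fS: "finite S" using Sn finite_subset by blast
      show "is_sw_max n \<theta> {1..card S}"
      proof (cases "S = {1..card S}")
        case True thus ?thesis using mx by simp
      next
        case False
        have "\<not> S \<subseteq> {1..card S}"
        proof
          assume "S \<subseteq> {1..card S}"
          moreover have "card S = card {1..card S}" by simp
          ultimately show False using False by (metis card_subset_eq finite_atLeastAtMost)
        qed
        then obtain j where j: "j \<in> S" "j \<notin> {1..card S}" by blast
        have j1: "j \<ge> 1" using j Sn by auto
        hence jgt: "j > card S" using j by auto
        have "\<not> {1..card S} \<subseteq> S"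
        proof
          assume sub: "{1..card S} \<subseteq> S"
          have "insert j {1..card S} \<subseteq> S" using sub j by auto
          hence "card (insert j {1..card S}) \<le> card S" using fS card_mono by blast
          thus False using j by simp
        qed
        then obtain i where i: "i \<in> {1..card S}" "i \<notin> S" by blast
        have ij: "i < j" using i jgt by auto
        let ?S' = "insert i (S - {j})"
        have mx': "is_sw_max n \<theta> ?S'"
          by (rule exchange[OF assms(2) mx j(1)]) (use i ij in auto)
        have cS': "card ?S' = card S" using fS i j
          by (metis card.insert card_Suc_Diff1 finite_Diff insert_Diff_single insert_iff)
        have "\<Sum>?S' = \<Sum>S - j + i"
        proof -
          have "\<Sum>?S' = i + \<Sum>(S - {j})" using fS i by (simp)
          moreover have "\<Sum>(S - {j}) + j = \<Sum>S" using fS j(1) by (metis add.commute sum.remove)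
          ultimately show ?thesis by simp
        qed
        moreover have "j \<le> \<Sum>S" using fS j(1) by (metis member_le_sum zero_le)
        ultimately have "\<Sum>?S' < m" using Sm ij by linarith
        hence "is_sw_max n \<theta> {1..card ?S'}" using less mx' by blast
        thus ?thesis using cS' by simp
      qed
    qed
  qed
  thus ?thesis using assms(4) by blast
qed

end
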